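(* Consider Algorithm 1 applied to $\min\varphi(w)$ s.t. $w\in D$, and fix an outer iteration $j$. Then either the inner loop terminates (i.e., some $i$ satisfies the nonmonotone Armijo condition), or $\|\gamma_{j,i}(w^j-w^{j,i})+\nabla\varphi(w^{j,i})-\nabla\varphi(w^j)\|\to0$ as $i\to\infty$. Moreover, if the inner loop does not terminate, then $w^{j,i}\to w^j$ as $i\to\infty$ and $w^j$ is an M-stationary point of this problem, i.e., $0\in\nabla\varphi(w^j)+\mathcal N^{\lim}_D(w^j)$.
   Context: $\mathbb W$ is a Euclidean space, $\varphi\colon\mathbb W\to\mathbb R$ continuously differentiable, $D\subset\mathbb W$ nonempty and closed (neither need be convex). The limiting normal cone at $\bar w\in D$ is $\mathcal N^{\lim}_D(\bar w):=\limsup_{w\to\bar w}\operatorname{cone}(w-\Pi_D(w))$ (outer set limit, $\Pi_D$ the multivalued Euclidean projection onto $D$). Algorithm 1 (general spectral gradient method, without termination test): parameters $\tau>1$, $\sigma\in(0,1)$, $0<\gamma_{\min}\le\gamma_{\max}<\infty$, $m\in\mathbb N$, starting point $w^0\in D$. For $j=0,1,2,\dots$: set $m_j:=\min(j,m)$ and choose $\gamma_j^0\in[\gamma_{\min},\gamma_{\max}]$; for $i=1,2,\dots$ set $\gamma_{j,i}:=\tau^{i-1}\gamma_j^0$ and compute a (global) solution $w^{j,i}$ of $\min_w \varphi(w^j)+\langle\nabla\varphi(w^j),w-w^j\rangle+\frac{\gamma_{j,i}}2\|w-w^j\|^2$ s.t. $w\in D$ (subproblem $Q(j,i)$); the inner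 loop stops at the first $i$ with $\varphi(w^{j,i})\le\max_{r=0,\dots,m_j}\varphi(w^{j-r})+\sigma\langle\nabla\varphi(w^j),w^{j,i}-w^j\rangle$; then set $i_j:=i$, $\gamma_j:=\gamma_{j,i_j}$, $w^{j+1}:=w^{j,i_j}$. *)

theory Defs
  imports "HOL-Analysis.Analysis"
begin

definition proj_set :: "'a::euclidean_space set \<Rightarrow> 'a \<Rightarrow> 'a set" where
  "proj_set D w = {p \<in> D. \<forall>d\<in>D. dist w p \<le> dist w d}"

text \<open>Outer (Painleve-Kuratowski) limit of a set-valued map S as w tends to wbar
  (sequential characterisation, w = wbar allowed).\<close>
definition outer_limsup :: "('a::metric_space \<Rightarrow> 'b::metric_space set) \<Rightarrow> 'a \<Rightarrow> 'b set" where
  "outer_limsup S wbar = {v. \<exists>ws vs. ws \<longlonglongrightarrow> wbar \<and> vs \<longlonglongrightarrow> v \<and> (\<forall>k. vs k \<in> S (ws k))}"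

definition lim_normal_cone :: "'a::euclidean_space set \<Rightarrow> 'a \<Rightarrow> 'a set" where
  "lim_normal_cone D wbar =
     outer_limsup (\<lambda>w. {t *\<^sub>R (w - p) | t p. t \<ge> 0 \<and> p \<in> proj_set D w}) wbar"

definition subproblem_sol ::
  "('a::euclidean_space \<Rightarrow> real) \<Rightarrow> ('a \<Rightarrow> 'a) \<Rightarrow> 'a set \<Rightarrow> 'a \<Rightarrow> real \<Rightarrow> 'a \<Rightarrow> bool" where
  "subproblem_sol \<phi> g D w gam x \<longleftrightarrow> x \<in> D \<and>
     (\<forall>y\<in>D. \<phi> w + g w \<bullet> (x - w) + gam / 2 * (norm (x - w))\<^sup>2
              \<le> \<phi> w + g w \<bullet> (y - w) + gam / 2 * (norm (y - w))\<^sup>2)"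

definition armijo_ok ::
  "('a::euclidean_space \<Rightarrow> real) \<Rightarrow> ('a \<Rightarrow> 'a) \<Rightarrow> real \<Rightarrow> nat \<Rightarrow> (nat \<Rightarrow> 'a) \<Rightarrow> nat \<Rightarrow> 'a \<Rightarrow> bool" where
  "armijo_ok \<phi> g \<sigma> m w j x \<longleftrightarrow>
     \<phi> x \<le> Max {\<phi> (w (j - r)) | r. r \<le> min j m} + \<sigma> * (g (w j) \<bullet> (x - w j))"

end

theory Submission
  imports Defs
begin

lemma norm_shift_sq:
  fixes u G :: "'a::euclidean_space"
  shows "(norm (u + c *\<^sub>R G))\<^sup>2 = (norm u)\<^sup>2 + 2 * c * (G \<bullet> u) + c\<^sup>2 * (norm G)\<^sup>2"
  unfolding power2_norm_eq_inner
  by (simp add: inner_add_left inner_add_right inner_commute algebra_simps power2_eq_square)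

lemma proj_of_sub:
  fixes G W x y :: "'a::euclidean_space"
  assumes gp: "\<gamma> > 0"
    and le: "G \<bullet> (x - W) + \<gamma>/2 * (norm (x-W))\<^sup>2 \<le> G \<bullet> (y - W) + \<gamma>/2*(norm(y-W))\<^sup>2"
  shows "dist (W - (1/\<gamma>) *\<^sub>R G) x \<le> dist (W - (1/\<gamma>) *\<^sub>R G) y"
proof -
  have e: "\<And>v. dist (W - (1/\<gamma>) *\<^sub>R G) v = norm ((v - W) + (1/\<gamma>) *\<^sub>R G)"
    by (simp add: dist_norm norm_minus_commute algebra_simps)
  have k: "\<And>u. (norm (u + (1/\<gamma>) *\<^sub>R G))\<^sup>2 = (2/\<gamma>) * (G \<bullet> u + \<gamma>/2 * (norm u)\<^sup>2) + (1/\<gamma>)\<^sup>2 * (norm G)\<^sup>2"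
    using gp by (simp add: norm_shift_sq field_simps)
  have "(norm ((x - W) + (1/\<gamma>) *\<^sub>R G))\<^sup>2 \<le> (norm ((y - W) + (1/\<gamma>) *\<^sub>R G))\<^sup>2"
  proof -
    have "(2/\<gamma>) * (G \<bullet> (x - W) + \<gamma>/2 * (norm (x-W))\<^sup>2) \<le> (2/\<gamma>) * (G \<bullet> (y - W) + \<gamma>/2*(norm(y-W))\<^sup>2)"
      using le gp by (intro mult_left_mono) auto
    then show ?thesis unfolding k by linarith
  qed
  then show ?thesis unfolding e by (rule power2_le_imp_le) simp
qed

theorem mainTheorem3:
  fixes \<phi> :: "'a::euclidean_space \<Rightarrow> real" and g :: "'a \<Rightarrow> 'a" and D :: "'a set"
    and \<tau> \<sigma> \<gamma>min \<gamma>max :: real and m j :: nat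
    and w :: "nat \<Rightarrow> 'a" and wi :: "nat \<Rightarrow> nat \<Rightarrow> 'a" and \<gamma>0 :: "nat \<Rightarrow> real"
  assumes grad: "\<And>x. (\<phi> has_derivative (\<lambda>h. g x \<bullet> h)) (at x)"
    and grad_cont: "continuous_on UNIV g"
    and D_ne: "D \<noteq> {}" and D_closed: "closed D"
    and tau: "\<tau> > 1" and sigma: "0 < \<sigma>" "\<sigma> < 1"
    and gam: "0 < \<gamma>min" "\<gamma>min \<le> \<gamma>max"
    and gam0: "\<And>k. k \<le> j \<Longrightarrow> \<gamma>min \<le> \<gamma>0 k \<and> \<gamma>0 k \<le> \<gamma>max"
    and start: "w 0 \<in> D"
    and sub: "\<And>k i. k \<le> j \<Longrightarrow> 1 \<le> i \<Longrightarrow>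
                subproblem_sol \<phi> g D (w k) (\<tau> ^ (i - 1) * \<gamma>0 k) (wi k i)"
    and prev_term: "\<And>k. k < j \<Longrightarrow> \<exists>i\<ge>1. armijo_ok \<phi> g \<sigma> m w k (wi k i)"
    and prev_step: "\<And>k. k < j \<Longrightarrow>
                w (Suc k) = wi k (LEAST i. 1 \<le> i \<and> armijo_ok \<phi> g \<sigma> m w k (wi k i))"
  shows "((\<exists>i\<ge>1. armijo_ok \<phi> g \<sigma> m w j (wi j i)) \<or>
         ((\<lambda>i. norm ((\<tau> ^ (i - 1) * \<gamma>0 j) *\<^sub>R (w j - wi j i) + g (wi j i) - g (w j)))
            \<longlonglongrightarrow> 0)) \<and>
         (\<not> (\<exists>i\<ge>1. armijo_ok \<phi> g \<sigma> m w j (wi j i)) \<longrightarrow>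
         (wi j \<longlonglongrightarrow> w j) \<and> 0 \<in> (\<lambda>v. g (w j) + v) ` lim_normal_cone D (w j))"
proof -
  define W where "W = w j"
  define G where "G = g W"
  define \<gamma> where "\<gamma> = (\<lambda>i::nat. \<tau> ^ (i - 1) * \<gamma>0 j)"
  define x where "x = wi j"
  have g0: "\<gamma>0 j \<ge> \<gamma>min" using gam0[of j] by simp
  have \<gamma>pos: "\<And>i. \<gamma> i > 0" unfolding \<gamma>_def using tau g0 gam by simp
  have wD: "\<And>k. k \<le> j \<Longrightarrow> w k \<in> D"
  proof -
    fix k assume "k \<le> j" thus "w k \<in> D"
    proof (induction k)
      case 0 show ?case using start by simp
    next
      case (Suc k)
      hence kj: "k < j" by simp
      let ?P = "\<lambda>i. 1 \<le> i \<and> armijo_ok \<phi> g \<sigma> m w k (wi k i)"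
      have "\<exists>i. ?P i" using prev_term[OF kj] by blast
      hence "?P (LEAST i. ?P i)" by (rule LeastI_ex)
      hence "wi k (LEAST i. ?P i) \<in> D" using sub[of k "LEAST i. ?P i"] kj
        unfolding subproblem_sol_def by simp
      thus ?case using prev_step[OF kj] by simp
    qed
  qed
  have WD: "W \<in> D" using wD W_def by simp
  have sol: "\<And>i. 1 \<le> i \<Longrightarrow> x i \<in> D \<and> (\<forall>y\<in>D. G \<bullet> (x i - W) + \<gamma> i/2*(norm(x i - W))\<^sup>2
        \<le> G \<bullet> (y - W) + \<gamma> i/2*(norm(y - W))\<^sup>2)"
  proof -
    fix i :: nat assume i: "1 \<le> i"
    have s: "subproblem_sol \<phi> g D W (\<gamma> i) (x i)" using sub[of j i] i
      unfolding W_def \<gamma>_def x_def by simp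
    thus "?thesis i" unfolding subproblem_sol_def G_def by simp
  qed
  have opt: "\<And>i. 1 \<le> i \<Longrightarrow> G \<bullet> (x i - W) + \<gamma> i/2*(norm(x i - W))\<^sup>2 \<le> 0"
    using sol WD by fastforce
  have proj: "\<And>i. 1 \<le> i \<Longrightarrow> x i \<in> proj_set D (W - (1/\<gamma> i) *\<^sub>R G)"
    unfolding proj_set_def using sol proj_of_sub[OF \<gamma>pos] by blast
  have \<gamma>inv: "(\<lambda>i. 1/\<gamma> i) \<longlonglongrightarrow> 0"
  proof -
    have "(\<lambda>n. inverse (\<tau>^n) / \<gamma>0 j) \<longlonglongrightarrow> 0 / \<gamma>0 j"
      by (intro tendsto_divide LIMSEQ_inverse_realpow_zero tau tendsto_const) (use g0 gam in auto)
    hence "(\<lambda>n. 1/\<gamma> (n+1)) \<longlonglongrightarrow> 0" by (simp add: \<gamma>_def divide_inverse mult.commute)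
    thus ?thesis by (rule LIMSEQ_offset)
  qed
  show ?thesis
  proof (cases "\<exists>i\<ge>1. armijo_ok \<phi> g \<sigma> m w j (wi j i)")
    case True thus ?thesis by simp
  next
    case False
    have fail: "\<phi> (x i) > \<phi> W + \<sigma> * (G \<bullet> (x i - W))" if i: "1 \<le> i" for i
    proof -
      have "\<not> armijo_ok \<phi> g \<sigma> m w j (wi j i)" using False i by blast
      hence "\<phi> (x i) > Max {\<phi> (w (j - r)) | r. r \<le> min j m} + \<sigma> * (g (w j) \<bullet> (x i - w j))"
        unfolding armijo_ok_def x_def by simp
      moreover have "\<phi> W \<le> Max {\<phi> (w (j - r)) | r. r \<le> min j m}"
        by (rule Max_ge) (auto simp: W_def intro!: exI[of _ 0])
      ultimately show ?thesis unfolding W_def G_def by simp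
    qed
    have dbound: "\<gamma> i * norm (x i - W) \<le> 2 * norm G" if i: "1 \<le> i" for i
    proof -
      have "\<gamma> i/2*(norm(x i - W))\<^sup>2 \<le> - (G \<bullet> (x i - W))" using opt[OF i] by simp
      also have "\<dots> \<le> norm G * norm (x i - W)"
        using norm_cauchy_schwarz[of "-G" "x i - W"] by simp
      finally have h: "(\<gamma> i * norm (x i - W)) * norm (x i - W) \<le> (2 * norm G) * norm (x i - W)"
        by (simp add: power2_eq_square algebra_simps)
      show ?thesis
      proof (cases "norm (x i - W) = 0")
        case True thus ?thesis by simp
      next
        case False
        hence "norm (x i - W) > 0" by simp
        thus ?thesis using h by (simp add: mult_le_cancel_right)
      qed
    qed
    have xconv: "x \<longlonglongrightarrow> W"
    proof -
      have "(\<lambda>i. x i - W) \<longlonglongrightarrow> 0"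
      proof (rule Lim_null_comparison)
        show "\<forall>\<^sub>F i in sequentially. norm (x i - W) \<le> 2 * norm G * (1 / \<gamma> i)"
        proof (rule eventually_sequentiallyI[of 1])
          fix i :: nat assume "1 \<le> i"
          hence "\<gamma> i * norm (x i - W) \<le> 2 * norm G" by (rule dbound)
          thus "norm (x i - W) \<le> 2 * norm G * (1 / \<gamma> i)"
            using \<gamma>pos[of i] by (simp add: field_simps)
        qed
        show "(\<lambda>i. 2 * norm G * (1 / \<gamma> i)) \<longlonglongrightarrow> 0"
          using tendsto_mult_right_zero[OF \<gamma>inv] by simp
      qed
      thus ?thesis by (simp add: Lim_null[symmetric])
    qed
    have key: "(\<lambda>i. \<gamma> i * norm (x i - W)) \<longlonglongrightarrow> 0"
      unfolding LIMSEQ_iff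
    proof (intro allI impI)
      fix r :: real assume r: "r > 0"
      define e where "e = r * (1 - \<sigma>) / 4"
      have e: "e > 0" using r sigma by (simp add: e_def)
      obtain d where d: "d > 0" and dd: "\<And>y. norm (y - W) < d \<Longrightarrow>
          norm (\<phi> y - \<phi> W - G \<bullet> (y - W)) \<le> e * norm (y - W)"
        using grad[of W] e unfolding has_derivative_at_alt G_def by blast
      have "(\<lambda>i. x i - W) \<longlonglongrightarrow> 0" using xconv by (simp add: Lim_null[symmetric])
      then obtain N where N: "\<And>n. n \<ge> N \<Longrightarrow> norm (x n - W) < d"
        using d unfolding LIMSEQ_iff by force
      show "\<exists>no. \<forall>n\<ge>no. norm (\<gamma> n * norm (x n - W) - 0) < r"
      proof (intro exI[of _ "max N 1"] allI impI)
        fix n assume n: "max N 1 \<le> n"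
        define t where "t = norm (x n - W)"
        have t0: "t \<ge> 0" by (simp add: t_def)
        have n1: "1 \<le> n" using n by simp
        have "norm (\<phi> (x n) - \<phi> W - G \<bullet> (x n - W)) \<le> e * t"
          using dd N n unfolding t_def by simp
        hence a: "\<phi> (x n) - \<phi> W \<le> G \<bullet> (x n - W) + e * t" by simp
        have b: "\<phi> (x n) > \<phi> W + \<sigma> * (G \<bullet> (x n - W))" using fail[OF n1] .
        have c: "\<gamma> n/2*t\<^sup>2 \<le> - (G \<bullet> (x n - W))" using opt[OF n1] by (simp add: t_def)
        have "(1 - \<sigma>) * (- (G \<bullet> (x n - W))) < e * t" using a b by (simp add: algebra_simps)
        moreover have "(1 - \<sigma>) * (\<gamma> n/2*t\<^sup>2) \<le> (1 - \<sigma>) * (- (G \<bullet> (x n - W)))"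
          using c sigma by (intro mult_left_mono) auto
        ultimately have f0: "(1 - \<sigma>) * (\<gamma> n/2*t\<^sup>2) < e * t" by linarith
        have "(1 - \<sigma>) * (\<gamma> n/2*t\<^sup>2) = ((1 - \<sigma>) * \<gamma> n / 2 * t) * t"
          by (simp add: power2_eq_square algebra_simps)
        with f0 have f: "((1 - \<sigma>) * \<gamma> n / 2 * t) * t < e * t" by linarith
        have tp: "t > 0" using f t0 e by (cases "t = 0") auto
        hence "(1 - \<sigma>) * \<gamma> n / 2 * t < e" using f by simp
        moreover have "(1 - \<sigma>) * (\<gamma> n * t) = 2 * ((1 - \<sigma>) * \<gamma> n / 2 * t)" by (simp add: algebra_simps)
        moreover have "(1 - \<sigma>) * (r / 2) = 2 * e" by (simp add: e_def)
        ultimately have "(1 - \<sigma>) * (\<gamma> n * t) < (1 - \<sigma>) * (r / 2)" by linarith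
        hence "\<gamma> n * t < r / 2" using sigma by (simp add: mult_less_cancel_left_pos)
        moreover have "\<gamma> n * t \<ge> 0" using \<gamma>pos[of n] t0 by simp
        ultimately show "norm (\<gamma> n * norm (x n - W) - 0) < r" using r by (simp add: t_def)
      qed
    qed
    have gconv: "(\<lambda>i. g (x i) - G) \<longlonglongrightarrow> 0"
    proof -
      have "(\<lambda>i. g (x i)) \<longlonglongrightarrow> g W"
        using grad_cont xconv by (metis UNIV_I continuous_on_def isCont_tendsto_compose continuous_on_eq_continuous_at open_UNIV)
      thus ?thesis by (simp add: G_def Lim_null[symmetric])
    qed
    have claim1: "(\<lambda>i. norm ((\<tau> ^ (i - 1) * \<gamma>0 j) *\<^sub>R (w j - wi j i) + g (wi j i) - g (w j))) \<longlonglongrightarrow> 0"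
    proof -
      have "(\<lambda>i. (\<tau> ^ (i - 1) * \<gamma>0 j) *\<^sub>R (w j - wi j i) + g (wi j i) - g (w j)) \<longlonglongrightarrow> 0"
      proof (rule Lim_null_comparison)
        show "\<forall>\<^sub>F i in sequentially. norm ((\<tau> ^ (i - 1) * \<gamma>0 j) *\<^sub>R (w j - wi j i) + g (wi j i) - g (w j))
              \<le> \<gamma> i * norm (x i - W) + norm (g (x i) - G)"
        proof (rule always_eventually, rule allI)
          fix i
          have "norm ((\<tau> ^ (i - 1) * \<gamma>0 j) *\<^sub>R (w j - wi j i) + g (wi j i) - g (w j))
              = norm (\<gamma> i *\<^sub>R (W - x i) + (g (x i) - G))"
            by (simp add: \<gamma>_def W_def x_def G_def algebra_simps)
          also have "\<dots> \<le> norm (\<gamma> i *\<^sub>R (W - x i)) + norm (g (x i) - G)" by (rule norm_triangle_ineq)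
          also have "norm (\<gamma> i *\<^sub>R (W - x i)) = \<gamma> i * norm (x i - W)"
            using \<gamma>pos[of i] by (simp add: norm_minus_commute)
          finally show "norm ((\<tau> ^ (i - 1) * \<gamma>0 j) *\<^sub>R (w j - wi j i) + g (wi j i) - g (w j))
              \<le> \<gamma> i * norm (x i - W) + norm (g (x i) - G)" .
        qed
        show "(\<lambda>i. \<gamma> i * norm (x i - W) + norm (g (x i) - G)) \<longlonglongrightarrow> 0"
          using tendsto_add_zero[OF key tendsto_norm_zero[OF gconv]] .
      qed
      thus ?thesis by (rule tendsto_norm_zero)
    qed
    have vconv: "(\<lambda>i. \<gamma> i *\<^sub>R (W - x i) - G) \<longlonglongrightarrow> - G"
    proof -
      have "(\<lambda>i. \<gamma> i *\<^sub>R (W - x i)) \<longlonglongrightarrow> 0"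
        using key \<gamma>pos by (subst tendsto_norm_zero_iff[symmetric]) (simp add: norm_minus_commute abs_of_pos)
      thus ?thesis using tendsto_diff[OF _ tendsto_const[of G]] by fastforce
    qed
    have zconv: "(\<lambda>i. W - (1/\<gamma> i) *\<^sub>R G) \<longlonglongrightarrow> W"
      using tendsto_diff[OF tendsto_const[of W] tendsto_scaleR[OF \<gamma>inv tendsto_const[of G]]] by simp
    define zs where "zs = (\<lambda>k. W - (1/\<gamma> (Suc k)) *\<^sub>R G)"
    define vs where "vs = (\<lambda>k. \<gamma> (Suc k) *\<^sub>R (W - x (Suc k)) - G)"
    have A: "zs \<longlonglongrightarrow> W" unfolding zs_def using LIMSEQ_Suc[OF zconv] .
    have B: "vs \<longlonglongrightarrow> - G" unfolding vs_def using LIMSEQ_Suc[OF vconv] .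
    have C: "vs k \<in> {t *\<^sub>R (zs k - p) |t p. t \<ge> 0 \<and> p \<in> proj_set D (zs k)}" for k
    proof -
      have e: "vs k = \<gamma> (Suc k) *\<^sub>R (zs k - x (Suc k))"
        using \<gamma>pos[of "Suc k"] by (simp add: vs_def zs_def algebra_simps)
      show ?thesis
        unfolding e using \<gamma>pos[of "Suc k"] proj[of "Suc k"] by (fastforce simp: zs_def)
    qed
    have "- G \<in> lim_normal_cone D W"
      unfolding lim_normal_cone_def outer_limsup_def
      using A B C by blast
    hence "0 \<in> (\<lambda>v. g (w j) + v) ` lim_normal_cone D (w j)"
      by (intro rev_image_eqI[of "- G"]) (auto simp: G_def W_def)
    thus ?thesis using claim1 xconv False by (simp add: x_def W_def)
  qed
qed

end
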